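(* Let $X$ be the set of numerical monoids $\langle n_1,n_2,n_3\rangle$ of embedding dimension three (presented by their minimal generators $n_1,n_2,n_3$) having exactly three Betti elements, and let $Y$ be the set of 0-matrices. Then the assignments \[ \langle n_1,n_2,n_3\rangle\mapsto \begin{pmatrix}0&r_{12}&r_{13}\\ r_{21}&0&r_{23}\\ r_{31}&r_{32}&0\end{pmatrix}\quad\text{and}\quad \begin{pmatrix}0&a_{12}&a_{13}\\ a_{21}&0&a_{23}\\ a_{31}&a_{32}&0\end{pmatrix}\mapsto\langle A_1,A_2,A_3\rangle \] give a bijection between $X$ and $Y$ (mutually inverse maps).
   Context: $\mathbb{N}$ denotes the nonnegative integers. A numerical monoid is a submonoid of $\mathbb{N}$ with finite complement; its embedding dimension is the number of minimal generators. For $x\in M=\langle n_1,n_2,n_3\rangle$, $\mathsf{Z}(x)=\{(a_1,a_2,a_3)\in\mathbb{N}^3\mid a_1n_1+a_2n_2+a_3n_3=x\}$. The graph $\nabla_x$ has vertex set $\mathsf{Z}(x)$, with distinct $v,v'$ adjacent iff $v\cdot v'\neq 0$; $x$ is a Betti element if $\nabla_x$ is disconnected. For $i=1,2,3$, $c_i=\min\{k\geq 1\mid \exists (a_1,a_2,a_3)\in\mathsf{Z}(kn_i),\ a_i=0\}$, and $r_{ij}\in\mathbb{N}$ are such that $c_in_i=r_{ij}n_j+r_{ik}n_k$ for $\{i,j,k\}=\{1,2,3\}$ (when $M$ has three Betti elements these coefficients are uniquely determined). A 0-matrix is a $3\times3$ matrix $\begin{pmatrix}0&a_{12}&a_{13}\\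 a_{21}&0&a_{23}\\ a_{31}&a_{32}&0\end{pmatrix}$ with $a_{ij}\in\mathbb{N}\setminus\{0\}$ such that $\langle A_1,A_2,A_3\rangle$ is a numerical monoid of embedding dimension three with three Betti elements, where $A_1=a_{12}a_{13}+a_{12}a_{23}+a_{13}a_{32}$, $A_2=a_{13}a_{21}+a_{21}a_{23}+a_{23}a_{31}$, $A_3=a_{12}a_{31}+a_{21}a_{32}+a_{31}a_{32}$. *)

theory Defs
  imports "HOL-Analysis.Finite_Cartesian_Product" "HOL-Library.Numeral_Type"
begin

type_synonym gens3 = "nat ^ 3"
type_synonym mat3 = "nat ^ 3 ^ 3"

definition lincomb :: "gens3 \<Rightarrow> nat ^ 3 \<Rightarrow> nat" where
  "lincomb n a = (\<Sum>i\<in>UNIV. a $ i * n $ i)"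

definition monoid3 :: "gens3 \<Rightarrow> nat set" where
  "monoid3 n = {x. \<exists>a. lincomb n a = x}"

definition is_numerical :: "gens3 \<Rightarrow> bool" where
  "is_numerical n \<longleftrightarrow> finite (UNIV - monoid3 n)"

text \<open>n$1, n$2, n$3 are the minimal generators: none lies in the monoid generated by the
  other two (this forces them to be nonzero and pairwise distinct).\<close>
definition minimal_gens3 :: "gens3 \<Rightarrow> bool" where
  "minimal_gens3 n \<longleftrightarrow> (\<forall>i. \<not> (\<exists>a. a $ i = 0 \<and> lincomb n a = n $ i))"

definition factorizations :: "gens3 \<Rightarrow> nat \<Rightarrow> (nat ^ 3) set" where
  "factorizations n x = {a. lincomb n a = x}"

definition dotp :: "nat ^ 3 \<Rightarrow> nat ^ 3 \<Rightarrow> nat" where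
  "dotp u v = (\<Sum>i\<in>UNIV. u $ i * v $ i)"

definition nabla_edges :: "gens3 \<Rightarrow> nat \<Rightarrow> ((nat ^ 3) \<times> (nat ^ 3)) set" where
  "nabla_edges n x = {(u, v). u \<in> factorizations n x \<and> v \<in> factorizations n x
      \<and> u \<noteq> v \<and> dotp u v \<noteq> 0}"

definition is_Betti :: "gens3 \<Rightarrow> nat \<Rightarrow> bool" where
  "is_Betti n x \<longleftrightarrow> x \<in> monoid3 n \<and>
     (\<exists>u\<in>factorizations n x. \<exists>v\<in>factorizations n x. (u, v) \<notin> (nabla_edges n x)\<^sup>*)"

definition Betti_elements :: "gens3 \<Rightarrow> nat set" where
  "Betti_elements n = {x. is_Betti n x}"

definition X_set :: "gens3 set" where
  "X_set = {n. is_numerical n \<and> minimal_gens3 n \<and> card (Betti_elements n) = 3}"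

definition c_coef :: "gens3 \<Rightarrow> 3 \<Rightarrow> nat" where
  "c_coef n i = (LEAST k. k \<ge> 1 \<and> (\<exists>a\<in>factorizations n (k * n $ i). a $ i = 0))"

text \<open>r_ij: the (unique) coefficients with c_i n_i = r_ij n_j + r_ik n_k.\<close>
definition r_coef :: "gens3 \<Rightarrow> 3 \<Rightarrow> 3 \<Rightarrow> nat" where
  "r_coef n i j = (THE a. a \<in> factorizations n (c_coef n i * n $ i) \<and> a $ i = 0) $ j"

definition r_matrix :: "gens3 \<Rightarrow> mat3" where
  "r_matrix n = (\<chi> i j. if i = j then 0 else r_coef n i j)"

definition A_gens :: "mat3 \<Rightarrow> gens3" where
  "A_gens a = (\<chi> i.
     if i = 1 then a$1$2 * a$1$3 + a$1$2 * a$2$3 + a$1$3 * a$3$2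
     else if i = 2 then a$1$3 * a$2$1 + a$2$1 * a$2$3 + a$2$3 * a$3$1
     else a$1$2 * a$3$1 + a$2$1 * a$3$2 + a$3$1 * a$3$2)"

definition is_zero_matrix :: "mat3 \<Rightarrow> bool" where
  "is_zero_matrix a \<longleftrightarrow> (\<forall>i. a$i$i = 0) \<and> (\<forall>i j. i \<noteq> j \<longrightarrow> a$i$j > 0) \<and>
     is_numerical (A_gens a) \<and> minimal_gens3 (A_gens a) \<and> card (Betti_elements (A_gens a)) = 3"

definition Y_set :: "mat3 set" where
  "Y_set = {a. is_zero_matrix a}"

end

theory Submission
  imports Defs "HOL-Analysis.Cartesian_Space"
begin


lemma signs0: fixes X Y Z :: int
  assumes "X + Y + Z = 0"
  shows "(X > 0 \<and> Y \<le> 0 \<and> Z \<le> 0) \<or> (Y > 0 \<and> X \<le> 0 \<and> Z \<le> 0) \<or> (Z>0 \<and> X\<le>0 \<and> Y\<le>0) \<or> (X<0 \<and> Y\<ge>0 \<and> Z\<ge>0) \<or> (Y<0 \<and> X\<ge>0 \<and> Z\<ge>0) \<or> (Z<0 \<and> X\<ge>0 \<and> Y\<ge>0) \<or> (X=0 \<and> Y=0 \<and> Z=0)"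
  using assms by presburger
lemma signmul: fixes x N :: int assumes "N > 0"
  shows "0 < x*N \<longleftrightarrow> 0 < x" "x*N < 0 \<longleftrightarrow> x < 0" "x*N = 0 \<longleftrightarrow> x = 0" "x*N \<le> 0 \<longleftrightarrow> x \<le> 0" "0 \<le> x*N \<longleftrightarrow> 0 \<le> x"
  using assms by (auto simp: zero_less_mult_iff mult_less_0_iff mult_le_0_iff zero_le_mult_iff)
lemma signs: fixes x y z N1 N2 N3 :: int
  assumes "x*N1 + y*N2 + z*N3 = 0" "N1 > 0" "N2 > 0" "N3 > 0"
  shows "(x > 0 \<and> y \<le> 0 \<and> z \<le> 0) \<or> (y > 0 \<and> x \<le> 0 \<and> z \<le> 0) \<or> (z>0 \<and> x\<le>0 \<and> y\<le>0) \<or> (x<0 \<and> y\<ge>0 \<and> z\<ge>0) \<or> (y<0 \<and> x\<ge>0 \<and> z\<ge>0) \<or> (z<0 \<and> x\<ge>0 \<and> y\<ge>0) \<or> (x=0 \<and> y=0 \<and> z=0)"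
  using signs0[OF assms(1)] unfolding signmul[OF assms(2)] signmul[OF assms(3)] signmul[OF assms(4)] .

lemma h1: fixes p q r w0 t u :: int
  assumes "r > 0" "w0 \<ge> 0" "t > 0" "u > 0" "q*(r+w0) < p*r" "p*t + q*u > 0"
  shows "p \<ge> 1 \<and> q \<le> p - 1"
proof (cases "q \<ge> 0")
  case True
  have "q*w0 \<ge> 0" using True assms by simp
  hence "q*r < p*r" using assms(5) by (simp add: algebra_simps)
  hence "q < p" using assms(1) by (simp add: mult_less_cancel_right)
  thus ?thesis using True by simp
next
  case False
  have "q*u < 0" using False assms by (simp add: mult_less_0_iff)
  hence "p*t > 0" using assms(6) by linarith
  hence "p > 0" using assms(3) by (simp add: zero_less_mult_iff)
  thus ?thesis using False by simp
qed

lemma h2: fixes P Q r1 m1 r2 m2 :: int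
  assumes "r1 > 0" "m1 \<ge> 0" "r2 > 0" "m2 \<ge> 0" "P*(r1+m1) > Q*r1" "Q*(r2+m2) > P*r2"
  shows "P \<ge> 1 \<and> Q \<ge> 1"
proof (rule ccontr)
  assume "\<not> (P \<ge> 1 \<and> Q \<ge> 1)"
  hence "P \<le> 0 \<or> Q \<le> 0" by auto
  hence PQ: "P \<le> 0 \<and> Q \<le> 0"
  proof
    assume P: "P \<le> 0"
    have "P*(r1+m1) \<le> 0" using P assms by (simp add: mult_le_0_iff)
    hence "Q*r1 < 0" using assms by linarith
    hence "Q < 0" using assms(1) by (simp add: mult_less_0_iff)
    thus ?thesis using P by simp
  next
    assume Q: "Q \<le> 0"
    have "Q*(r2+m2) \<le> 0" using Q assms by (simp add: mult_le_0_iff)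
    hence "P*r2 < 0" using assms by linarith
    hence "P < 0" using assms(3) by (simp add: mult_less_0_iff)
    thus ?thesis using Q by simp
  qed
  have "P*m1 \<le> 0" "Q*m2 \<le> 0" using PQ assms by (auto simp: mult_le_0_iff)
  hence "(P - Q)*r1 > 0" "(Q - P)*r2 > 0" using assms(5,6) by (simp_all add: algebra_simps)
  hence "P - Q > 0" "Q - P > 0" using assms(1,3) by (simp_all add: zero_less_mult_iff)
  thus False by simp
qed

lemma comb: fixes p1 q1 p2 q2 :: int
  assumes "p1 \<ge> 1" "q1 \<le> p1 - 1" "q2 \<ge> 1" "p2 \<le> q2 - 1" "p1 + p2 \<ge> 1" "q1 + q2 \<ge> 1" "p1*q2 - q1*p2 = 1"
  shows "p1 = 1 \<and> q1 = 0 \<and> p2 = 0 \<and> q2 = 1"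
proof (cases "q1*p2 \<le> 0")
  case True
  have "p1*q2 \<ge> p1*1" using assms by (simp add: mult_left_mono)
  moreover have "p1*q2 \<ge> 1*q2" using assms by (simp add: mult_right_mono)
  ultimately have "p1 = 1" "q2 = 1" using True assms(7) assms(1,3) by linarith+
  thus ?thesis using assms by simp
next
  case False
  hence "q1 > 0 \<and> p2 > 0 \<or> q1 < 0 \<and> p2 < 0" by (auto simp: mult_le_0_iff)
  thus ?thesis
  proof
    assume h: "q1 > 0 \<and> p2 > 0"
    have "q1*p2 \<le> (p1 - 1)*p2" using h assms by (simp add: mult_right_mono)
    also have "\<dots> \<le> (p1 - 1)*(q2 - 1)" using h assms by (simp add: mult_left_mono)
    finally have "p1*q2 - q1*p2 \<ge> p1 + q2 - 1" by (simp add: algebra_simps)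
    thus ?thesis using h assms by linarith
  next
    assume h: "q1 < 0 \<and> p2 < 0"
    have "p1 \<ge> 1 - p2" "q2 \<ge> 1 - q1" using assms by linarith+
    have "(1 - p2)*(1 - q1) \<le> (1 - p2)*q2" using h assms by (intro mult_left_mono) auto
    also have "\<dots> \<le> p1*q2" using h assms by (intro mult_right_mono) auto
    finally have "p1*q2 \<ge> (1 - p2)*(1 - q1)" .
    hence "p1*q2 - q1*p2 \<ge> 1 - p2 - q1" by (simp add: algebra_simps)
    thus ?thesis using h assms by linarith
  qed
qed

locale tri =
  fixes N1 N2 N3 C1 C2 C3 R12 R13 R21 R23 R31 R32 :: int
  assumes pN1: "N1 > 0" and pN2: "N2 > 0" and pN3: "N3 > 0"
  and pC1: "C1 \<ge> 1" and pC2: "C2 \<ge> 1" and pC3: "C3 \<ge> 1"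
  and nR12: "R12 \<ge> 0" and nR13: "R13 \<ge> 0" and nR21: "R21 \<ge> 0"
  and nR23: "R23 \<ge> 0" and nR31: "R31 \<ge> 0" and nR32: "R32 \<ge> 0"
  and min1: "\<And>k b c. 1 \<le> k \<Longrightarrow> k < C1 \<Longrightarrow> 0 \<le> b \<Longrightarrow> 0 \<le> c \<Longrightarrow> k*N1 \<noteq> b*N2 + c*N3"
  and min2: "\<And>k a c. 1 \<le> k \<Longrightarrow> k < C2 \<Longrightarrow> 0 \<le> a \<Longrightarrow> 0 \<le> c \<Longrightarrow> k*N2 \<noteq> a*N1 + c*N3"
  and min3: "\<And>k a b. 1 \<le> k \<Longrightarrow> k < C3 \<Longrightarrow> 0 \<le> a \<Longrightarrow> 0 \<le> b \<Longrightarrow> k*N3 \<noteq> a*N1 + b*N2"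
  and e1: "C1*N1 = R12*N2 + R13*N3" and e2: "C2*N2 = R21*N1 + R23*N3"
  and e3: "C3*N3 = R31*N1 + R32*N2"
  and d12: "C1*N1 \<noteq> C2*N2" and d13: "C1*N1 \<noteq> C3*N3" and d23: "C2*N2 \<noteq> C3*N3"
begin

lemma sw12: "tri N2 N1 N3 C2 C1 C3 R21 R23 R12 R13 R32 R31"
proof unfold_locales
qed (use pN1 pN2 pN3 pC1 pC2 pC3 nR12 nR13 nR21 nR23 nR31 nR32 min1 min2 e1 e2 e3 d12 d13 d23 in
     \<open>auto simp: add.commute dest: min3\<close>)

lemma sw13: "tri N3 N2 N1 C3 C2 C1 R32 R31 R23 R21 R13 R12"
proof unfold_locales
qed (use pN1 pN2 pN3 pC1 pC2 pC3 nR12 nR13 nR21 nR23 nR31 nR32 e1 e2 e3 d12 d13 d23 in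
     \<open>auto simp: add.commute dest: min3 min2 min1\<close>)

lemma sw23: "tri N1 N3 N2 C1 C3 C2 R13 R12 R31 R32 R21 R23"
proof unfold_locales
qed (use pN1 pN2 pN3 pC1 pC2 pC3 nR12 nR13 nR21 nR23 nR31 nR32 e1 e2 e3 d12 d13 d23 in
     \<open>auto simp: add.commute dest: min3 min2 min1\<close>)

lemma rot1: "tri N2 N3 N1 C2 C3 C1 R23 R21 R32 R31 R12 R13"
proof unfold_locales
qed (use pN1 pN2 pN3 pC1 pC2 pC3 nR12 nR13 nR21 nR23 nR31 nR32 e1 e2 e3 d12 d13 d23 in
     \<open>auto simp: add.commute dest: min3 min2 min1\<close>)

lemma rot2: "tri N3 N1 N2 C3 C1 C2 R31 R32 R13 R12 R23 R21"
proof unfold_locales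
qed (use pN1 pN2 pN3 pC1 pC2 pC3 nR12 nR13 nR21 nR23 nR31 nR32 e1 e2 e3 d12 d13 d23 in
     \<open>auto simp: add.commute dest: min3 min2 min1\<close>)

lemma D1: "R12 < C2"
proof (rule ccontr)
  assume "\<not> R12 < C2" hence h: "R12 \<ge> C2" by simp
  have Z: "a = 0" if a0: "a \<ge> 0" and c0: "c \<ge> 0" and ac: "C2*N2 = a*N1 + c*N3" for a c
  proof (rule ccontr)
    assume "a \<noteq> 0" hence a1: "a \<ge> 1" using a0 by simp
    have eq: "C1*N1 = a*N1 + (R12 - C2)*N2 + (c + R13)*N3"
      using e1 ac by (simp add: algebra_simps)
    have p2: "(R12 - C2)*N2 \<ge> 0" using h pN2 by simp
    have p3: "(c + R13)*N3 \<ge> 0" using c0 nR13 pN3 by simp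
    show False
    proof (cases "a < C1")
      case True
      have "(C1 - a)*N1 = (R12 - C2)*N2 + (c+R13)*N3" using eq by (simp add: algebra_simps)
      then show False using min1[of "C1 - a" "R12 - C2" "c + R13"] True a1 h c0 nR13 by auto
    next
      case False
      hence "a*N1 \<ge> C1*N1" using pN1 by (simp add: mult_right_mono)
      hence "(R12 - C2)*N2 = 0" "(c+R13)*N3 = 0" using eq p2 p3 by linarith+
      hence "R12 = C2" "c + R13 = 0" using pN2 pN3 by auto
      hence "c = 0" using c0 nR13 by simp
      hence "C2*N2 = C1*N1" using eq ac \<open>(R12 - C2)*N2 = 0\<close> \<open>(c+R13)*N3 = 0\<close> by simp
      then show False using d12 by simp
    qed
  qed
  have r21: "R21 = 0" using Z[OF nR21 nR23 e2] .
  hence e2': "C2*N2 = R23*N3" using e2 by simp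
  have "C2*N2 > 0" using pC2 pN2 by simp
  hence "R23*N3 > 0" using e2' by simp
  hence r23p: "R23 \<ge> 1" using pN3 by (simp add: zero_less_mult_iff)
  have "\<not> R23 < C3" using min3[of R23 0 C2] r23p pC2 e2' by auto
  moreover have "R23 \<noteq> C3" using d23 e2' by auto
  ultimately have r23: "R23 > C3" by simp
  have eq2: "(C2 - R32)*N2 = R31*N1 + (R23 - C3)*N3" using e2' e3 by (simp add: algebra_simps)
  have "R31*N1 \<ge> 0" using nR31 pN1 by simp
  moreover have "(R23 - C3)*N3 > 0" using r23 pN3 by simp
  ultimately have "(C2 - R32)*N2 > 0" using eq2 by linarith
  hence lt: "R32 < C2" using pN2 by (simp add: zero_less_mult_iff)
  have r32: "R32 = 0"
  proof (rule ccontr)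
    assume "R32 \<noteq> 0" hence "R32 \<ge> 1" using nR32 by simp
    then show False using min2[of "C2 - R32" R31 "R23 - C3"] lt eq2 nR31 r23 by auto
  qed
  have "C2*N2 = R31*N1 + (R23 - C3)*N3" using eq2 r32 by simp
  hence "R31 = 0" using Z[of R31 "R23 - C3"] nR31 r23 by simp
  hence "C3*N3 = 0" using e3 r32 by simp
  thus False using pC3 pN3 by simp
qed


lemmas D1all = D1 tri.D1[OF sw12] tri.D1[OF sw13] tri.D1[OF sw23] tri.D1[OF rot1] tri.D1[OF rot2]

lemma W: "(C1 - R21 - R31)*N1 + (C2 - R12 - R32)*N2 + (C3 - R13 - R23)*N3 = 0"
  using e1 e2 e3 by (simp add: algebra_simps)

lemma poscase: "C1 - R21 - R31 > 0 \<Longrightarrow> C2 - R12 - R32 \<le> 0 \<Longrightarrow> C3 - R13 - R23 \<le> 0 \<Longrightarrow> False"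
proof -
  assume a1: "C1 - R21 - R31 > 0" and a2: "C2 - R12 - R32 \<le> 0" and a3: "C3 - R13 - R23 \<le> 0"
  have eq: "(C1 - R21 - R31)*N1 = (-(C2 - R12 - R32))*N2 + (-(C3 - R13 - R23))*N3"
    using W by (simp add: algebra_simps)
  have "\<not> C1 - R21 - R31 < C1"
    using min1[of "C1 - R21 - R31" "-(C2 - R12 - R32)" "-(C3 - R13 - R23)"] a1 a2 a3 eq by auto
  hence z: "R21 = 0" "R31 = 0" using nR21 nR31 by auto
  have f2: "C2*N2 = R23*N3" and f3: "C3*N3 = R32*N2" using e2 e3 z by auto
  have "(C2*C3)*(N2*N3) = (C2*N2)*(C3*N3)" by (simp add: algebra_simps)
  also have "\<dots> = (R23*R32)*(N2*N3)" using f2 f3 by (simp add: algebra_simps)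
  finally have "C2*C3 = R23*R32" using pN2 pN3 by simp
  moreover have "R23*R32 \<le> R23*C2" using D1all nR23 by (simp add: mult_left_mono)
  moreover have "R23*C2 < C3*C2" using D1all pC2 by simp
  ultimately show False by (simp add: mult.commute)
qed

lemma negcase: "C3 - R13 - R23 < 0 \<Longrightarrow> C1 - R21 - R31 \<ge> 0 \<Longrightarrow> C2 - R12 - R32 \<ge> 0 \<Longrightarrow> False"
proof -
  assume a3: "C3 - R13 - R23 < 0" and a1: "C1 - R21 - R31 \<ge> 0" and a2: "C2 - R12 - R32 \<ge> 0"
  have eq: "(R13 + R23 - C3)*N3 = (C1 - R21 - R31)*N1 + (C2 - R12 - R32)*N2"
    using W by (simp add: algebra_simps)
  show False
    using min3[of "R13 + R23 - C3" "C1 - R21 - R31" "C2 - R12 - R32"] a1 a2 a3 eq D1all by auto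
qed

lemma D2: "C1 = R21 + R31 \<and> C2 = R12 + R32 \<and> C3 = R13 + R23"
proof -
  note P = poscase tri.poscase[OF sw12] tri.poscase[OF sw13]
  note Ng = negcase tri.negcase[OF sw13] tri.negcase[OF sw23]
  define w1 where "w1 = C1 - R21 - R31"
  define w2 where "w2 = C2 - R12 - R32"
  define w3 where "w3 = C3 - R13 - R23"
  have WW: "w1*N1 + w2*N2 + w3*N3 = 0" using W unfolding w1_def w2_def w3_def .
  have s1: "w1*N1 > 0 \<longleftrightarrow> w1 > 0" "w1*N1 < 0 \<longleftrightarrow> w1 < 0" using pN1 by (auto simp: zero_less_mult_iff mult_less_0_iff)
  have s2: "w2*N2 > 0 \<longleftrightarrow> w2 > 0" "w2*N2 < 0 \<longleftrightarrow> w2 < 0" using pN2 by (auto simp: zero_less_mult_iff mult_less_0_iff)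
  have s3: "w3*N3 > 0 \<longleftrightarrow> w3 > 0" "w3*N3 < 0 \<longleftrightarrow> w3 < 0" using pN3 by (auto simp: zero_less_mult_iff mult_less_0_iff)
  have P': "w1 > 0 \<Longrightarrow> w2 \<le> 0 \<Longrightarrow> w3 \<le> 0 \<Longrightarrow> False" "w2 > 0 \<Longrightarrow> w1 \<le> 0 \<Longrightarrow> w3 \<le> 0 \<Longrightarrow> False"
     "w3 > 0 \<Longrightarrow> w1 \<le> 0 \<Longrightarrow> w2 \<le> 0 \<Longrightarrow> False"
    using P unfolding w1_def w2_def w3_def by (auto simp: algebra_simps)
  have N': "w3 < 0 \<Longrightarrow> w1 \<ge> 0 \<Longrightarrow> w2 \<ge> 0 \<Longrightarrow> False" "w1 < 0 \<Longrightarrow> w2 \<ge> 0 \<Longrightarrow> w3 \<ge> 0 \<Longrightarrow> False"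
     "w2 < 0 \<Longrightarrow> w1 \<ge> 0 \<Longrightarrow> w3 \<ge> 0 \<Longrightarrow> False"
    using Ng unfolding w1_def w2_def w3_def by (auto simp: algebra_simps)
  have "w1 = 0 \<and> w2 = 0 \<and> w3 = 0"
    using WW s1 s2 s3 P' N' by smt
  thus ?thesis unfolding w1_def w2_def w3_def by simp
qed

lemma D3: "R12 > 0"
  using D2 D1all nR12 by fastforce

lemmas D2all = D2 tri.D2[OF sw12] tri.D2[OF sw13]
lemmas D3all = D3 tri.D3[OF sw12] tri.D3[OF sw13] tri.D3[OF sw23] tri.D3[OF rot1] tri.D3[OF rot2]

lemma step: "x*N1 + y*N2 + z*N3 = 0 \<Longrightarrow> x > 0 \<Longrightarrow> y \<le> 0 \<Longrightarrow> z \<le> 0 \<Longrightarrow>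
  \<bar>x - C1\<bar>*N1 + \<bar>y + R12\<bar>*N2 + \<bar>z + R13\<bar>*N3 < \<bar>x\<bar>*N1 + \<bar>y\<bar>*N2 + \<bar>z\<bar>*N3"
proof -
  assume h: "x*N1 + y*N2 + z*N3 = 0" "x > 0" "y \<le> 0" "z \<le> 0"
  have eq: "x*N1 = (-y)*N2 + (-z)*N3" using h(1) by (simp add: algebra_simps)
  have xc: "x \<ge> C1"
  proof (rule ccontr)
    assume "\<not> x \<ge> C1"
    then show False using min1[of x "-y" "-z"] h eq by auto
  qed
  define T2 where "T2 = R12 + \<bar>y\<bar> - \<bar>y + R12\<bar>"
  define T3 where "T3 = R13 + \<bar>z\<bar> - \<bar>z + R13\<bar>"
  have t2: "T2 \<ge> 0" "y < 0 \<Longrightarrow> T2 > 0" using D3all h unfolding T2_def by auto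
  have t3: "T3 \<ge> 0" "z < 0 \<Longrightarrow> T3 > 0" using D3all h unfolding T3_def by auto
  have yz: "y < 0 \<or> z < 0"
  proof (rule ccontr)
    assume "\<not> (y < 0 \<or> z < 0)"
    hence "y = 0" "z = 0" using h by auto
    hence "x*N1 = 0" using h by simp
    thus False using h pN1 by simp
  qed
  have pos: "T2*N2 + T3*N3 > 0"
  proof -
    have "T2*N2 \<ge> 0" "T3*N3 \<ge> 0" using t2 t3 pN2 pN3 by auto
    moreover have "T2*N2 > 0 \<or> T3*N3 > 0" using yz t2 t3 pN2 pN3 by auto
    ultimately show ?thesis by linarith
  qed
  have "\<bar>x\<bar>*N1 + \<bar>y\<bar>*N2 + \<bar>z\<bar>*N3 - (\<bar>x - C1\<bar>*N1 + \<bar>y + R12\<bar>*N2 + \<bar>z + R13\<bar>*N3)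
        = C1*N1 + (\<bar>y\<bar> - \<bar>y + R12\<bar>)*N2 + (\<bar>z\<bar> - \<bar>z + R13\<bar>)*N3"
    using xc h by (simp add: algebra_simps)
  also have "\<dots> = T2*N2 + T3*N3" unfolding T2_def T3_def using e1 by (simp add: algebra_simps)
  finally show ?thesis using pos by linarith
qed



lemma natlt: "0 \<le> a \<Longrightarrow> a < b \<Longrightarrow> nat a < nat b" for a b :: int by simp

lemma span: "x*N1 + y*N2 + z*N3 = 0 \<Longrightarrow> \<exists>p q. x = p*C1 - q*R21 \<and> y = q*C2 - p*R12 \<and> z = -(p*R13) - q*R23"
proof (induction "nat (\<bar>x\<bar>*N1 + \<bar>y\<bar>*N2 + \<bar>z\<bar>*N3)" arbitrary: x y z rule: less_induct)
  case less
  note IH = less(1)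
  note S2 = tri.step[OF sw12] and S3 = tri.step[OF sw13]
  have D: "C1 = R21 + R31" "C2 = R12 + R32" "C3 = R13 + R23" using D2 by auto
  have nn: "\<bar>a\<bar>*N1 + \<bar>b\<bar>*N2 + \<bar>c\<bar>*N3 \<ge> 0" for a b c using pN1 pN2 pN3 by simp
  have IH': "\<exists>p q. x' = p*C1 - q*R21 \<and> y' = q*C2 - p*R12 \<and> z' = -(p*R13) - q*R23"
    if "\<bar>x'\<bar>*N1 + \<bar>y'\<bar>*N2 + \<bar>z'\<bar>*N3 < \<bar>x\<bar>*N1 + \<bar>y\<bar>*N2 + \<bar>z\<bar>*N3" "x'*N1 + y'*N2 + z'*N3 = 0" for x' y' z'
    using IH[OF natlt[OF nn that(1)] that(2)] .
  have cA: ?case if "x > 0" "y \<le> 0" "z \<le> 0"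
  proof -
    have lt: "\<bar>x - C1\<bar>*N1 + \<bar>y + R12\<bar>*N2 + \<bar>z + R13\<bar>*N3 < \<bar>x\<bar>*N1 + \<bar>y\<bar>*N2 + \<bar>z\<bar>*N3"
      using step[OF less(2) that] .
    have "(x - C1)*N1 + (y + R12)*N2 + (z + R13)*N3 = 0" using less(2) e1 by (simp add: algebra_simps)
    then obtain p q where "x - C1 = p*C1 - q*R21 \<and> y + R12 = q*C2 - p*R12 \<and> z + R13 = -(p*R13) - q*R23"
      using IH'[OF lt] by blast
    then show ?thesis by (intro exI[of _ "p+1"] exI[of _ q]) (simp add: algebra_simps)
  qed
  have cB: ?case if "y > 0" "x \<le> 0" "z \<le> 0"
  proof -
    have "y*N2 + x*N1 + z*N3 = 0" using less(2) by (simp add: algebra_simps)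
    from S2[OF this that]
    have lt: "\<bar>x + R21\<bar>*N1 + \<bar>y - C2\<bar>*N2 + \<bar>z + R23\<bar>*N3 < \<bar>x\<bar>*N1 + \<bar>y\<bar>*N2 + \<bar>z\<bar>*N3"
      by (simp add: algebra_simps)
    have "(x + R21)*N1 + (y - C2)*N2 + (z + R23)*N3 = 0" using less(2) e2 by (simp add: algebra_simps)
    then obtain p q where "x + R21 = p*C1 - q*R21 \<and> y - C2 = q*C2 - p*R12 \<and> z + R23 = -(p*R13) - q*R23"
      using IH'[OF lt] by blast
    then show ?thesis by (intro exI[of _ p] exI[of _ "q+1"]) (simp add: algebra_simps)
  qed
  have cC: ?case if "z > 0" "x \<le> 0" "y \<le> 0"
  proof -
    have "z*N3 + y*N2 + x*N1 = 0" using less(2) by (simp add: algebra_simps)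
    from S3[OF this that(1) that(3) that(2)]
    have lt: "\<bar>x + R31\<bar>*N1 + \<bar>y + R32\<bar>*N2 + \<bar>z - C3\<bar>*N3 < \<bar>x\<bar>*N1 + \<bar>y\<bar>*N2 + \<bar>z\<bar>*N3"
      by (simp add: algebra_simps)
    have "(x + R31)*N1 + (y + R32)*N2 + (z - C3)*N3 = 0" using less(2) e3 by (simp add: algebra_simps)
    then obtain p q where "x + R31 = p*C1 - q*R21 \<and> y + R32 = q*C2 - p*R12 \<and> z - C3 = -(p*R13) - q*R23"
      using IH'[OF lt] by blast
    then show ?thesis using D by (intro exI[of _ "p - 1"] exI[of _ "q - 1"]) (simp add: algebra_simps)
  qed
  have cA': ?case if "x < 0" "y \<ge> 0" "z \<ge> 0"
  proof -
    have "(-x)*N1 + (-y)*N2 + (-z)*N3 = 0" using less(2) by simp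
    from step[OF this] that
    have lt0: "\<bar>-x - C1\<bar>*N1 + \<bar>-y + R12\<bar>*N2 + \<bar>-z + R13\<bar>*N3 < \<bar>-x\<bar>*N1 + \<bar>-y\<bar>*N2 + \<bar>-z\<bar>*N3"
      by simp
    have "\<bar>-x - C1\<bar> = \<bar>x + C1\<bar>" "\<bar>-y + R12\<bar> = \<bar>y - R12\<bar>" "\<bar>-z + R13\<bar> = \<bar>z - R13\<bar>" by arith+
    with lt0 have lt: "\<bar>x + C1\<bar>*N1 + \<bar>y - R12\<bar>*N2 + \<bar>z - R13\<bar>*N3 < \<bar>x\<bar>*N1 + \<bar>y\<bar>*N2 + \<bar>z\<bar>*N3" by simp
    have "(x + C1)*N1 + (y - R12)*N2 + (z - R13)*N3 = 0" using less(2) e1 by (simp add: algebra_simps)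
    then obtain p q where "x + C1 = p*C1 - q*R21 \<and> y - R12 = q*C2 - p*R12 \<and> z - R13 = -(p*R13) - q*R23"
      using IH'[OF lt] by blast
    then show ?thesis by (intro exI[of _ "p - 1"] exI[of _ q]) (simp add: algebra_simps)
  qed
  have cB': ?case if "y < 0" "x \<ge> 0" "z \<ge> 0"
  proof -
    have "(-y)*N2 + (-x)*N1 + (-z)*N3 = 0" using less(2) by (simp add: algebra_simps)
    from S2[OF this] that
    have lt0: "\<bar>-y - C2\<bar>*N2 + \<bar>-x + R21\<bar>*N1 + \<bar>-z + R23\<bar>*N3 < \<bar>-y\<bar>*N2 + \<bar>-x\<bar>*N1 + \<bar>-z\<bar>*N3"
      by simp
    have "\<bar>-y - C2\<bar> = \<bar>y + C2\<bar>" "\<bar>-x + R21\<bar> = \<bar>x - R21\<bar>" "\<bar>-z + R23\<bar> = \<bar>z - R23\<bar>" by arith+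
    with lt0 have lt: "\<bar>x - R21\<bar>*N1 + \<bar>y + C2\<bar>*N2 + \<bar>z - R23\<bar>*N3 < \<bar>x\<bar>*N1 + \<bar>y\<bar>*N2 + \<bar>z\<bar>*N3" by simp
    have "(x - R21)*N1 + (y + C2)*N2 + (z - R23)*N3 = 0" using less(2) e2 by (simp add: algebra_simps)
    then obtain p q where "x - R21 = p*C1 - q*R21 \<and> y + C2 = q*C2 - p*R12 \<and> z - R23 = -(p*R13) - q*R23"
      using IH'[OF lt] by blast
    then show ?thesis by (intro exI[of _ p] exI[of _ "q - 1"]) (simp add: algebra_simps)
  qed
  have cC': ?case if "z < 0" "x \<ge> 0" "y \<ge> 0"
  proof -
    have "(-z)*N3 + (-y)*N2 + (-x)*N1 = 0" using less(2) by (simp add: algebra_simps)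
    from S3[OF this] that
    have lt0: "\<bar>-z - C3\<bar>*N3 + \<bar>-y + R32\<bar>*N2 + \<bar>-x + R31\<bar>*N1 < \<bar>-z\<bar>*N3 + \<bar>-y\<bar>*N2 + \<bar>-x\<bar>*N1"
      by simp
    have "\<bar>-z - C3\<bar> = \<bar>z + C3\<bar>" "\<bar>-y + R32\<bar> = \<bar>y - R32\<bar>" "\<bar>-x + R31\<bar> = \<bar>x - R31\<bar>" by arith+
    with lt0 have lt: "\<bar>x - R31\<bar>*N1 + \<bar>y - R32\<bar>*N2 + \<bar>z + C3\<bar>*N3 < \<bar>x\<bar>*N1 + \<bar>y\<bar>*N2 + \<bar>z\<bar>*N3" by simp
    have "(x - R31)*N1 + (y - R32)*N2 + (z + C3)*N3 = 0" using less(2) e3 by (simp add: algebra_simps)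
    then obtain p q where "x - R31 = p*C1 - q*R21 \<and> y - R32 = q*C2 - p*R12 \<and> z + C3 = -(p*R13) - q*R23"
      using IH'[OF lt] by blast
    then show ?thesis using D by (intro exI[of _ "p + 1"] exI[of _ "q + 1"]) (simp add: algebra_simps)
  qed
  have c0: ?case if "x = 0" "y = 0" "z = 0" using that by (intro exI[of _ 0] exI[of _ 0]) simp
  have s1: "x*N1 > 0 \<longleftrightarrow> x > 0" "x*N1 < 0 \<longleftrightarrow> x < 0" using pN1 by (auto simp: zero_less_mult_iff mult_less_0_iff)
  have s2: "y*N2 > 0 \<longleftrightarrow> y > 0" "y*N2 < 0 \<longleftrightarrow> y < 0" using pN2 by (auto simp: zero_less_mult_iff mult_less_0_iff)
  have s3: "z*N3 > 0 \<longleftrightarrow> z > 0" "z*N3 < 0 \<longleftrightarrow> z < 0" using pN3 by (auto simp: zero_less_mult_iff mult_less_0_iff)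
  from signs[OF less(2) pN1 pN2 pN3] show ?case using cA cB cC cA' cB' cC' c0 by blast
qed


lemma cross1:
  assumes "a2 = q*C2 - p*R12" "a3 = -(p*R13) - q*R23"
  shows "-R12*a3 + R13*a2 = q*(R12*R13 + R12*R23 + R13*R32)"
proof -
  have C2: "C2 = R12 + R32" using D2 by simp
  show ?thesis unfolding assms C2 by (simp add: algebra_simps)
qed

lemma NA:
  assumes bz: "bu*N1 + bv*N2 + bw*N3 = 1"
  shows "N1 = R12*R13 + R12*R23 + R13*R32 \<and> N2 = R13*R21 + R21*R23 + R23*R31 \<and> N3 = R12*R31 + R21*R32 + R31*R32"
proof -
  have D: "C1 = R21 + R31" "C2 = R12 + R32" "C3 = R13 + R23" using D2 by auto
  define A1 where "A1 = R12*R13 + R12*R23 + R13*R32"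
  define A2 where "A2 = R13*R21 + R21*R23 + R23*R31"
  define A3 where "A3 = R12*R31 + R21*R32 + R31*R32"
  define E1 where "E1 = (R21 + R31)*N1 - R12*N2 - R13*N3"
  define E2 where "E2 = (R12 + R32)*N2 - R21*N1 - R23*N3"
  have E: "E1 = 0" "E2 = 0" using e1 e2 D unfolding E1_def E2_def by auto
  have "A1*N2 - A2*N1 = -R23*E1 + R13*E2" unfolding A1_def A2_def E1_def E2_def by (simp add: algebra_simps)
  hence x12: "A1*N2 = A2*N1" using E by simp
  have "A3*N1 - A1*N3 = (R12 + R32)*E1 + R12*E2" unfolding A1_def A3_def E1_def E2_def by (simp add: algebra_simps)
  hence x13: "A1*N3 = A3*N1" using E by simp
  have "A2*N3 - A3*N2 = -R21*E1 - (R21 + R31)*E2" unfolding A2_def A3_def E1_def E2_def by (simp add: algebra_simps)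
  hence x23: "A2*N3 = A3*N2" using E by simp
  define d where "d = bu*A1 + bv*A2 + bw*A3"
  have "A1 = A1*(bu*N1 + bv*N2 + bw*N3)" using bz by simp
  also have "\<dots> = bu*(A1*N1) + bv*(A1*N2) + bw*(A1*N3)" by (simp add: algebra_simps)
  also have "\<dots> = d*N1" unfolding d_def using x12 x13 by (simp add: algebra_simps)
  finally have a1: "A1 = d*N1" .
  have "A2 = A2*(bu*N1 + bv*N2 + bw*N3)" using bz by simp
  also have "\<dots> = bu*(A2*N1) + bv*(A2*N2) + bw*(A2*N3)" by (simp add: algebra_simps)
  also have "\<dots> = d*N2" unfolding d_def using x12 x23 by (simp add: algebra_simps)
  finally have a2: "A2 = d*N2" .
  have "A3 = A3*(bu*N1 + bv*N2 + bw*N3)" using bz by simp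
  also have "\<dots> = bu*(A3*N1) + bv*(A3*N2) + bw*(A3*N3)" by (simp add: algebra_simps)
  also have "\<dots> = bu*(A1*N3) + bv*(A2*N3) + bw*(A3*N3)" using x13 x23 by simp
  also have "\<dots> = d*N3" unfolding d_def by (simp add: algebra_simps)
  finally have a3: "A3 = d*N3" .
  have "A1 > 0" unfolding A1_def using D3all nR23 nR32 by (simp add: add_pos_nonneg)
  hence dpos: "d > 0" using a1 pN1 by (simp add: zero_less_mult_iff)
  obtain p q where pq: "N2 = p*C1 - q*R21" "-N1 = q*C2 - p*R12" "0 = -(p*R13) - q*R23"
    using span[of N2 "-N1" 0] by (auto simp: algebra_simps)
  have "-R13*N1 = q*A1" using cross1[OF pq(2) pq(3)] unfolding A1_def by simp
  hence "R13*N1 = (-q*d)*N1" using a1 by simp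
  hence r13: "R13 = -q*d" using pN1 by (metis mult_right_cancel less_irrefl)
  obtain p' q' where pq': "N3 = p'*C1 - q'*R21" "0 = q'*C2 - p'*R12" "-N1 = -(p'*R13) - q'*R23"
    using span[of N3 0 "-N1"] by (auto simp: algebra_simps)
  have "R12*N1 = q'*A1" using cross1[OF pq'(2) pq'(3)] unfolding A1_def by simp
  hence "R12*N1 = (q'*d)*N1" using a1 by simp
  hence r12: "R12 = q'*d" using pN1 by (metis mult_right_cancel less_irrefl)
  obtain p'' q'' where pq'': "0 = p''*C1 - q''*R21" "N3 = q''*C2 - p''*R12" "-N2 = -(p''*R13) - q''*R23"
    using span[of 0 N3 "-N2"] by (auto simp: algebra_simps)
  have "R12*N2 + R13*N3 = q''*A1" using cross1[OF pq''(2) pq''(3)] unfolding A1_def by simp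
  hence "C1*N1 = (q''*d)*N1" using a1 e1 by simp
  hence c1: "C1 = q''*d" using pN1 by (metis mult_right_cancel less_irrefl)
  have "d = 1"
  proof (rule ccontr)
    assume "d \<noteq> 1" hence d2: "d \<ge> 2" using dpos by simp
    have "q''*d > 0" using c1 pC1 by simp
    hence qq: "q'' \<ge> 1" using dpos by (simp add: zero_less_mult_iff)
    have "q''*2 \<le> q''*d" using d2 qq by (simp add: mult_left_mono)
    hence "q'' < C1" using c1 qq by linarith
    moreover have "q' \<ge> 0" using r12 nR12 dpos by (simp add: zero_le_mult_iff)
    moreover have "(-q)*d \<ge> 0" using r13 nR13 by simp
    hence "-q \<ge> 0" using dpos by (simp add: mult_le_0_iff)
    moreover have "q''*N1 = q'*N2 + (-q)*N3"
    proof -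
      have "d*(q''*N1) = d*(q'*N2 + (-q)*N3)" using e1 c1 r12 r13 by (simp add: algebra_simps)
      thus ?thesis using dpos by simp
    qed
    ultimately show False using min1[of q'' q' "-q"] qq by auto
  qed
  then show ?thesis using a1 a2 a3 unfolding A1_def A2_def A3_def by simp
qed


lemma inj_part:
  assumes bz: "bu*N1 + bv*N2 + bw*N3 = 1"
  and pa: "a12 > 0" "a13 > 0" "a21 > 0" "a23 > 0" "a31 > 0" "a32 > 0"
  and na1: "N1 = a12*a13 + a12*a23 + a13*a32"
  and na2: "N2 = a13*a21 + a21*a23 + a23*a31"
  and na3: "N3 = a12*a31 + a21*a32 + a31*a32"
  shows "a12 = R12 \<and> a13 = R13 \<and> a21 = R21 \<and> a23 = R23 \<and> a31 = R31 \<and> a32 = R32"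
proof -
  have D: "C1 = R21 + R31" "C2 = R12 + R32" "C3 = R13 + R23" using D2 by auto
  have NR: "N1 = R12*R13 + R12*R23 + R13*R32" using NA[OF bz] by simp
  have u1: "(a21 + a31)*N1 + (-a12)*N2 + (-a13)*N3 = 0"
    unfolding na1 na2 na3 by (simp add: algebra_simps)
  have u2: "(-a21)*N1 + (a12 + a32)*N2 + (-a23)*N3 = 0"
    unfolding na1 na2 na3 by (simp add: algebra_simps)
  obtain p1 q1 where pq1: "a21 + a31 = p1*C1 - q1*R21" "-a12 = q1*C2 - p1*R12" "-a13 = -(p1*R13) - q1*R23"
    using span[OF u1] by blast
  obtain p2 q2 where pq2: "-a21 = p2*C1 - q2*R21" "a12 + a32 = q2*C2 - p2*R12" "-a23 = -(p2*R13) - q2*R23"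
    using span[OF u2] by blast
  have "(-a12)*(-a23) - (-a13)*(a12 + a32) = N1" unfolding na1 by (simp add: algebra_simps)
  moreover have "(-a12)*(-a23) - (-a13)*(a12 + a32) = (p1*q2 - q1*p2)*(R12*R13 + R12*R23 + R13*R32)"
    unfolding pq1(2) pq1(3) pq2(2) pq2(3) D by (simp add: algebra_simps)
  ultimately have "(p1*q2 - q1*p2)*N1 = 1*N1" using NR by simp
  hence det: "p1*q2 - q1*p2 = 1" using pN1 by (metis mult_right_cancel less_irrefl)
  have c1: "p1 \<ge> 1 \<and> q1 \<le> p1 - 1"
  proof (rule h1[of R12 R32 R13 R23])
    show "q1*(R12 + R32) < p1*R12" using pq1(2) pa D by simp
    show "p1*R13 + q1*R23 > 0" using pq1(3) pa by simp
  qed (use D3all nR32 in auto)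
  have c2: "q2 \<ge> 1 \<and> p2 \<le> q2 - 1"
  proof (rule h1[of R21 R31 R23 R13])
    show "p2*(R21 + R31) < q2*R21" using pq2(1) pa D by simp
    show "q2*R23 + p2*R13 > 0" using pq2(3) pa by simp
  qed (use D3all nR31 in auto)
  have c3: "p1 + p2 \<ge> 1 \<and> q1 + q2 \<ge> 1"
  proof (rule h2[of R21 R31 R12 R32])
    show "(p1 + p2)*(R21 + R31) > (q1 + q2)*R21" using pq1(1) pq2(1) pa D by (simp add: algebra_simps)
    show "(q1 + q2)*(R12 + R32) > (p1 + p2)*R12" using pq1(2) pq2(2) pa D by (simp add: algebra_simps)
  qed (use D3all nR31 nR32 in auto)
  have "p1 = 1 \<and> q1 = 0 \<and> p2 = 0 \<and> q2 = 1" using comb c1 c2 c3 det by blast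
  then show ?thesis using pq1 pq2 D by auto
qed

end



lemma uniq1:
  assumes T: "tri N1 N2 N3 C1 C2 C3 R12 R13 R21 R23 R31 R32"
  and b0: "b \<ge> 0" and c0: "c \<ge> 0" and eq: "C1*N1 = b*N2 + c*N3"
  shows "b = R12 \<and> c = R13"
proof -
  interpret t: tri N1 N2 N3 C1 C2 C3 R12 R13 R21 R23 R31 R32 by (rule T)
  have T2: "tri N1 N2 N3 C1 C2 C3 b c R21 R23 R31 R32"
    by unfold_locales (fact t.pN1 t.pN2 t.pN3 t.pC1 t.pC2 t.pC3 b0 c0 t.nR21 t.nR23 t.nR31 t.nR32
        t.min1 t.min2 t.min3 eq t.e2 t.e3 t.d12 t.d13 t.d23)+
  show ?thesis using t.D2 tri.D2[OF T2] by linarith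
qed

definition ev :: "3 \<Rightarrow> nat \<Rightarrow> nat^3" where "ev i m = (\<chi> l. if l = i then m else 0)"
definition mk3 :: "nat \<Rightarrow> nat \<Rightarrow> nat \<Rightarrow> nat^3" where
  "mk3 x y z = (\<chi> l. if l = 1 then x else if l = 2 then y else z)"

lemma ev_nth[simp]: "ev i m $ l = (if l = i then m else 0)" by (simp add: ev_def)
lemma mk3_nth[simp]: "mk3 x y z $ 1 = x" "mk3 x y z $ 2 = y" "mk3 x y z $ 3 = z"
  by (simp_all add: mk3_def)
lemma lincomb3: "lincomb n a = a$1*n$1 + a$2*n$2 + a$3*n$3" by (simp add: lincomb_def sum_3)
lemma dotp3: "dotp u y = u$1*y$1 + u$2*y$2 + u$3*y$3" by (simp add: dotp_def sum_3)
lemma vec3_eq: "(a::nat^3) = b \<longleftrightarrow> a$1 = b$1 \<and> a$2 = b$2 \<and> a$3 = b$3"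
  by (auto simp: vec_eq_iff forall_3)
lemma lincomb_ev: "lincomb n (ev i m) = m * n$i" using exhaust_3[of i] by (auto simp: lincomb3)
lemma dotp_ev: "dotp (ev i m) w = m * w$i" using exhaust_3[of i] by (auto simp: dotp3)
lemma dotp_comm: "dotp u y = dotp y u" by (simp add: dotp3 mult.commute)
lemma lincomb_add: "lincomb n (a + b) = lincomb n a + lincomb n b" by (simp add: lincomb3 algebra_simps)
lemma lincomb_split: "lincomb n w = lincomb n (\<chi> l. if l = i then 0 else w$l) + w$i * n$i"
  using exhaust_3[of i] by (auto simp: lincomb3)
lemma lincomb_zero: "\<forall>i. n$i > 0 \<Longrightarrow> lincomb n a = 0 \<Longrightarrow> a = 0"
proof -
  assume np: "\<forall>i. n$i > 0" and l: "lincomb n a = 0"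
  have "n$1 > 0" "n$2 > 0" "n$3 > 0" using np by auto
  thus ?thesis using l by (auto simp: lincomb3 vec3_eq)
qed
lemma fact_iff: "a \<in> factorizations n x \<longleftrightarrow> lincomb n a = x" by (simp add: factorizations_def)

lemma npos: "minimal_gens3 n \<Longrightarrow> n$i > 0"
proof -
  assume "minimal_gens3 n"
  hence "\<not> ((0::nat^3)$i = 0 \<and> lincomb n 0 = n$i)" unfolding minimal_gens3_def by blast
  thus ?thesis by (simp add: lincomb_def)
qed

definition cP :: "gens3 \<Rightarrow> 3 \<Rightarrow> nat \<Rightarrow> bool" where
  "cP n i k \<longleftrightarrow> k \<ge> 1 \<and> (\<exists>a\<in>factorizations n (k * n$i). a$i = 0)"

lemma cP_ex:
  assumes np: "\<forall>i. n$i > 0"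
  shows "\<exists>k. cP n i k"
proof -
  define j where "j = (if i = 1 then 2 else (1::3))"
  have ji: "j \<noteq> i" unfolding j_def by auto
  have "ev j (n$i) \<in> factorizations n (n$j * n$i)" by (simp add: fact_iff lincomb_ev)
  moreover have "ev j (n$i) $ i = 0" using ji by simp
  moreover have "n$j \<ge> 1" using np by (simp add: Suc_le_eq)
  ultimately show ?thesis unfolding cP_def by blast
qed

lemma c_props:
  assumes np: "\<forall>i. n$i > 0"
  shows "cP n i (c_coef n i)" "cP n i k \<Longrightarrow> c_coef n i \<le> k"
proof -
  have cc: "c_coef n i = (LEAST k. cP n i k)" unfolding c_coef_def cP_def by simp
  obtain k0 where "cP n i k0" using cP_ex[OF np] by blast
  then show "cP n i (c_coef n i)" unfolding cc by (rule LeastI)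
  show "cP n i k \<Longrightarrow> c_coef n i \<le> k" unfolding cc by (rule Least_le)
qed

lemma iso_rt: "(\<forall>w. (s,w) \<notin> R) \<Longrightarrow> (s,t) \<in> R\<^sup>* \<Longrightarrow> t = s"
  by (erule converse_rtranclE) auto

lemma Betti_c:
  assumes np: "\<forall>i. n$i > 0"
  shows "is_Betti n (c_coef n i * n$i)"
proof -
  define C where "C = c_coef n i"
  define x where "x = C * n$i"
  have cp: "cP n i C" using c_props(1)[OF np] unfolding C_def .
  then obtain r where r: "r \<in> factorizations n x" "r$i = 0" and C1: "C \<ge> 1"
    unfolding cP_def x_def by blast
  define s where "s = ev i C"
  have sF: "s \<in> factorizations n x" unfolding s_def x_def by (simp add: fact_iff lincomb_ev)
  have iso: "\<forall>w. (s,w) \<notin> nabla_edges n x"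
  proof (intro allI notI)
    fix w assume "(s,w) \<in> nabla_edges n x"
    hence wF: "lincomb n w = C * n$i" and ws: "s \<noteq> w" and dp: "dotp s w \<noteq> 0"
      unfolding nabla_edges_def x_def by (auto simp: fact_iff)
    have wi: "w$i > 0" using dp unfolding s_def dotp_ev by simp
    define w' where "w' = (\<chi> l. if l = i then 0 else w$l)"
    have spl: "lincomb n w' + w$i * n$i = C * n$i" using lincomb_split[of n w i] wF unfolding w'_def by simp
    show False
    proof (cases "w$i \<ge> C")
      case True
      have "w$i * n$i \<ge> C * n$i" using True by simp
      hence "lincomb n w' = 0" "w$i * n$i = C * n$i" using spl by linarith+
      hence "w' = 0" "w$i = C" using np lincomb_zero[OF np, of w'] np[rule_format, of i] by auto
      hence w0: "w' = 0" and wC: "w$i = C" by auto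
      have "w = s"
      proof (rule vec_eq_iff[THEN iffD2], intro allI)
        fix l show "w$l = s$l"
        proof (cases "l = i")
          case True thus ?thesis using wC by (simp add: s_def)
        next
          case False
          have "w'$l = 0" using w0 by simp
          thus ?thesis using False by (simp add: w'_def s_def)
        qed
      qed
      thus False using ws by simp
    next
      case False
      have "lincomb n w' = (C - w$i) * n$i" using spl by (simp add: diff_mult_distrib)
      hence "cP n i (C - w$i)" unfolding cP_def using False by (auto simp: fact_iff w'_def intro!: bexI[of _ w'])
      hence "C \<le> C - w$i" using c_props(2)[OF np] unfolding C_def by blast
      thus False using wi False by simp
    qed
  qed
  have "(s, r) \<notin> (nabla_edges n x)\<^sup>*"
  proof
    assume "(s, r) \<in> (nabla_edges n x)\<^sup>*"
    hence "r = s" using iso_rt[OF iso] by blast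
    thus False using r(2) C1 unfolding s_def by simp
  qed
  moreover have "x \<in> monoid3 n" using sF unfolding monoid3_def fact_iff by blast
  ultimately show ?thesis unfolding is_Betti_def x_def[symmetric] C_def[symmetric] using sF r(1) by blast
qed


lemma E_sym: "(a,b) \<in> nabla_edges n x \<Longrightarrow> (b,a) \<in> nabla_edges n x"
  by (auto simp: nabla_edges_def dotp_comm)

definition big :: "nat^3 \<Rightarrow> bool" where
  "big w \<longleftrightarrow> (w$1 \<noteq> 0 \<and> w$2 \<noteq> 0) \<or> (w$1 \<noteq> 0 \<and> w$3 \<noteq> 0) \<or> (w$2 \<noteq> 0 \<and> w$3 \<noteq> 0)"

lemma notbig: "\<not> big w \<Longrightarrow> \<exists>i m. w = ev i m"
proof -
  assume "\<not> big w"
  hence "(w$2 = 0 \<and> w$3 = 0) \<or> (w$1 = 0 \<and> w$3 = 0) \<or> (w$1 = 0 \<and> w$2 = 0)" unfolding big_def by auto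
  thus ?thesis
  proof (elim disjE)
    assume "w$2 = 0 \<and> w$3 = 0" hence "w = ev 1 (w$1)" by (simp add: vec3_eq) thus ?thesis by blast
  next
    assume "w$1 = 0 \<and> w$3 = 0" hence "w = ev 2 (w$2)" by (simp add: vec3_eq) thus ?thesis by blast
  next
    assume "w$1 = 0 \<and> w$2 = 0" hence "w = ev 3 (w$3)" by (simp add: vec3_eq) thus ?thesis by blast
  qed
qed

lemma big_dotp: "big a \<Longrightarrow> big b \<Longrightarrow> dotp a b \<noteq> 0"
  by (auto simp: big_def dotp3)

lemma dotp_ev_ev: "dotp (ev i m) (ev j m') \<noteq> 0 \<Longrightarrow> i = j"
  by (simp add: dotp_ev split: if_splits)

lemma conn:
  assumes np: "\<forall>i. n$i > 0"
  and H: "\<forall>s\<in>factorizations n x. (\<exists>i m. s = ev i m) \<longrightarrow> (\<exists>w\<in>factorizations n x. w \<noteq> s \<and> dotp s w \<noteq> 0)"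
  and u: "u \<in> factorizations n x" and v: "v \<in> factorizations n x"
  shows "(u,v) \<in> (nabla_edges n x)\<^sup>*"
proof -
  let ?F = "factorizations n x" and ?E = "nabla_edges n x"
  have toBig: "\<exists>b\<in>?F. big b \<and> (s,b) \<in> ?E\<^sup>*" if s: "s \<in> ?F" for s
  proof (cases "big s")
    case True thus ?thesis using s by blast
  next
    case False then obtain i m where sm: "s = ev i m" using notbig by blast
    then obtain w where w: "w \<in> ?F" "w \<noteq> s" "dotp s w \<noteq> 0" using H s by blast
    have "big w"
    proof (rule ccontr)
      assume "\<not> big w" then obtain j m' where wm: "w = ev j m'" using notbig by blast
      have ij: "i = j" using w(3) sm wm dotp_ev_ev by blast
      have "m * n$i = x" "m' * n$i = x" using s w(1) sm wm ij by (auto simp: fact_iff lincomb_ev)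
      hence "m * n$i = m' * n$i" by simp
      hence "m = m'" using np[rule_format, of i] by (simp only: mult_cancel2) simp
      thus False using w(2) sm wm ij by simp
    qed
    moreover have "(s,w) \<in> ?E" using s w unfolding nabla_edges_def by auto
    ultimately show ?thesis using w(1) by blast
  qed
  obtain bu where bu: "bu \<in> ?F" "big bu" "(u,bu) \<in> ?E\<^sup>*" using toBig[OF u] by blast
  obtain bv where bv: "bv \<in> ?F" "big bv" "(v,bv) \<in> ?E\<^sup>*" using toBig[OF v] by blast
  have m1: "(bu,bv) \<in> ?E\<^sup>*"
  proof (cases "bu = bv")
    case False
    hence "(bu,bv) \<in> ?E" using bu bv big_dotp unfolding nabla_edges_def by auto
    thus ?thesis by blast
  qed simp
  have m2: "(bv,v) \<in> ?E\<^sup>*"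
  proof -
    have "sym ?E" by (auto simp: sym_def intro: E_sym)
    hence "sym (?E\<^sup>*)" by (rule sym_rtrancl)
    thus ?thesis using bv(3) by (auto dest: symD)
  qed
  show ?thesis by (rule rtrancl_trans[OF rtrancl_trans[OF bu(3) m1] m2])
qed

lemma Betti_is_c:
  assumes np: "\<forall>i. n$i > 0" and B: "is_Betti n x"
  shows "\<exists>i. x = c_coef n i * n$i"
proof -
  let ?F = "factorizations n x" and ?E = "nabla_edges n x"
  obtain u v where uF: "u \<in> ?F" and vF: "v \<in> ?F" and nc: "(u,v) \<notin> ?E\<^sup>*"
    using B unfolding is_Betti_def by blast
  have "\<not> (\<forall>s\<in>?F. (\<exists>i m. s = ev i m) \<longrightarrow> (\<exists>w\<in>?F. w \<noteq> s \<and> dotp s w \<noteq> 0))"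
    using conn[OF np _ uF vF] nc by blast
  then obtain s i m where sF: "s \<in> ?F" and sm: "s = ev i m" and iso: "\<forall>w\<in>?F. w \<noteq> s \<longrightarrow> dotp s w = 0"
    by blast
  have "u \<noteq> v" using nc by auto
  then obtain t where tF: "t \<in> ?F" and ts: "t \<noteq> s" using uF vF by metis
  have xm: "x = m * n$i" using sF sm by (simp add: fact_iff lincomb_ev)
  have m0: "m \<noteq> 0"
  proof
    assume "m = 0"
    hence "lincomb n t = 0" using tF xm by (simp add: fact_iff)
    hence "t = 0" using lincomb_zero[OF np] by blast
    moreover have "s = 0" using sm \<open>m = 0\<close> by (simp add: vec_eq_iff)
    ultimately show False using ts by simp
  qed
  have ti: "t$i = 0" using iso tF ts sm dotp_ev m0 by auto
  have "cP n i m" unfolding cP_def using m0 tF ti xm by (auto simp: Suc_le_eq)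
  hence Cm: "c_coef n i \<le> m" using c_props(2)[OF np] by blast
  have "\<not> c_coef n i < m"
  proof
    assume lt: "c_coef n i < m"
    define C where "C = c_coef n i"
    obtain r where r: "lincomb n r = C * n$i" "r$i = 0" and C1: "C \<ge> 1"
      using c_props(1)[OF np, of i] unfolding cP_def C_def by (auto simp: fact_iff)
    define w where "w = r + ev i (m - C)"
    have "lincomb n w = C * n$i + (m - C) * n$i" by (simp add: w_def lincomb_add lincomb_ev r)
    also have "\<dots> = m * n$i" using lt unfolding C_def by (simp add: add_mult_distrib[symmetric])
    finally have wF: "w \<in> ?F" using xm by (simp add: fact_iff)
    have "w \<noteq> s"
    proof
      assume ws: "w = s"
      have "r = 0"
      proof (rule vec_eq_iff[THEN iffD2], intro allI)
        fix l show "r$l = 0$l"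
        proof (cases "l = i")
          case True thus ?thesis using r by simp
        next
          case False
          have "w$l = s$l" using ws by simp
          thus ?thesis using False sm by (simp add: w_def)
        qed
      qed
      hence "C * n$i = 0" using r(1) by (simp add: lincomb_def)
      thus False using C1 np[rule_format, of i] by simp
    qed
    moreover have "dotp s w \<noteq> 0" using sm m0 lt r(2) by (simp add: dotp_ev w_def C_def)
    ultimately show False using iso wF by (metis)
  qed
  hence "x = c_coef n i * n$i" using Cm xm by simp
  thus ?thesis by blast
qed

lemma Betti_set:
  assumes np: "\<forall>i. n$i > 0"
  shows "Betti_elements n = {c_coef n 1 * n$1, c_coef n 2 * n$2, c_coef n 3 * n$3}"
proof
  show "Betti_elements n \<subseteq> {c_coef n 1 * n$1, c_coef n 2 * n$2, c_coef n 3 * n$3}"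
  proof
    fix x assume "x \<in> Betti_elements n"
    then obtain i where "x = c_coef n i * n$i" using Betti_is_c[OF np] unfolding Betti_elements_def by blast
    thus "x \<in> {c_coef n 1 * n$1, c_coef n 2 * n$2, c_coef n 3 * n$3}" using exhaust_3[of i] by auto
  qed
  show "{c_coef n 1 * n$1, c_coef n 2 * n$2, c_coef n 3 * n$3} \<subseteq> Betti_elements n"
    using Betti_c[OF np] unfolding Betti_elements_def by blast
qed




lemma card3: "card {a,b,c} = 3 \<Longrightarrow> a \<noteq> b \<and> a \<noteq> c \<and> b \<noteq> c"
proof -
  assume h: "card {a,b,c} = 3"
  have "card {a,b,c} \<le> 2" if "a = b \<or> a = c \<or> b = c"
    using that card_insert_le[of "{c}" b] card_insert_le[of "{b}" a] by (auto simp: card_insert_if)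
  thus ?thesis using h by auto
qed

lemma int_nat_eq:
  assumes "k \<ge> 0" "b \<ge> 0" "c \<ge> 0" "k * int x = b * int y + c * int z"
  shows "nat k * x = nat b * y + nat c * z"
proof -
  have "int (nat k * x) = int (nat b * y + nat c * z)" using assms by simp
  thus ?thesis by (simp only: of_nat_eq_iff)
qed

lemma numerical_bezout:
  assumes num: "is_numerical n" and np: "\<forall>i. n$i > 0"
  shows "\<exists>bu bv bw. bu * int (n$1) + bv * int (n$2) + bw * int (n$3) = 1"
proof -
  define g where "g = gcd (n$1) (gcd (n$2) (n$3))"
  have gpos: "g > 0" unfolding g_def using np by simp
  have g1: "g = 1"
  proof (rule ccontr)
    assume "g \<noteq> 1" hence g2: "g \<ge> 2" using gpos by simp
    have dv: "g dvd n$1" "g dvd n$2" "g dvd n$3" unfolding g_def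
      by (meson gcd_dvd1 gcd_dvd2 dvd_trans)+
    have sub: "range (\<lambda>k. g*k + 1) \<subseteq> UNIV - monoid3 n"
    proof (rule subsetI)
      fix y assume "y \<in> range (\<lambda>k. g*k + 1)"
      then obtain k where y: "y = g*k + 1" by blast
      have "y \<notin> monoid3 n"
      proof
        assume "y \<in> monoid3 n"
        then obtain a where "lincomb n a = y" unfolding monoid3_def by blast
        moreover have "g dvd lincomb n a" unfolding lincomb3 using dv by simp
        ultimately have "g dvd g*k + 1" using y by simp
        moreover have "g dvd g*k" by simp
        ultimately have "g dvd 1" by (metis dvd_add_right_iff)
        thus False using g2 by simp
      qed
      thus "y \<in> UNIV - monoid3 n" by simp
    qed
    have "inj (\<lambda>k. g*k + 1)" using gpos by (auto simp: inj_def)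
    hence "infinite (range (\<lambda>k. g*k + 1))" by (rule range_inj_infinite)
    moreover have "finite (UNIV - monoid3 n)" using num unfolding is_numerical_def .
    ultimately show False using sub finite_subset by blast
  qed
  have gi: "gcd (int (n$1)) (gcd (int (n$2)) (int (n$3))) = 1"
    using g1 unfolding g_def by (simp add: gcd_int_int_eq)
  obtain u v where uv: "u * int (n$2) + v * int (n$3) = gcd (int (n$2)) (int (n$3))" using bezout_int by blast
  obtain u' v' where uv': "u' * int (n$1) + v' * gcd (int (n$2)) (int (n$3)) = gcd (int (n$1)) (gcd (int (n$2)) (int (n$3)))"
    using bezout_int by blast
  have "u' * int (n$1) + (v' * u) * int (n$2) + (v' * v) * int (n$3) = u' * int (n$1) + v' * (u * int (n$2) + v * int (n$3))"
    by (simp add: algebra_simps)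
  also have "\<dots> = 1" using uv uv' gi by simp
  finally show ?thesis by blast
qed

lemma X_tri:
  assumes num: "is_numerical n" and mg: "minimal_gens3 n" and c3: "card (Betti_elements n) = 3"
  shows "tri (int (n$1)) (int (n$2)) (int (n$3)) (int (c_coef n 1)) (int (c_coef n 2)) (int (c_coef n 3))
    (int (r_coef n 1 2)) (int (r_coef n 1 3)) (int (r_coef n 2 1)) (int (r_coef n 2 3)) (int (r_coef n 3 1)) (int (r_coef n 3 2))"
proof -
  have np: "\<forall>i. n$i > 0" using npos[OF mg] by blast
  have np1: "n$1 > 0" and np2: "n$2 > 0" and np3: "n$3 > 0" using np by auto
  define c1 where "c1 = c_coef n 1"
  define c2 where "c2 = c_coef n 2"
  define c3' where "c3' = c_coef n 3"
  obtain a1 where a1: "lincomb n a1 = c1 * n$1" "a1$1 = 0" and c1p: "c1 \<ge> 1"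
    using c_props(1)[OF np, of 1] unfolding cP_def c1_def by (auto simp: fact_iff)
  obtain a2 where a2: "lincomb n a2 = c2 * n$2" "a2$2 = 0" and c2p: "c2 \<ge> 1"
    using c_props(1)[OF np, of 2] unfolding cP_def c2_def by (auto simp: fact_iff)
  obtain a3 where a3: "lincomb n a3 = c3' * n$3" "a3$3 = 0" and c3p: "c3' \<ge> 1"
    using c_props(1)[OF np, of 3] unfolding cP_def c3'_def by (auto simp: fact_iff)
  have dist: "c1 * n$1 \<noteq> c2 * n$2" "c1 * n$1 \<noteq> c3' * n$3" "c2 * n$2 \<noteq> c3' * n$3"
  proof -
    have "card {c1 * n$1, c2 * n$2, c3' * n$3} = 3"
      using c3 unfolding Betti_set[OF np] c1_def c2_def c3'_def .
    from card3[OF this] show "c1 * n$1 \<noteq> c2 * n$2" "c1 * n$1 \<noteq> c3' * n$3" "c2 * n$2 \<noteq> c3' * n$3" by auto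
  qed
  have min1n: "k * n$1 \<noteq> b * n$2 + c * n$3" if "1 \<le> k" "k < c1" for k b c
  proof
    assume "k * n$1 = b * n$2 + c * n$3"
    hence "mk3 0 b c \<in> factorizations n (k * n$1)" by (simp add: fact_iff lincomb3)
    moreover have "(mk3 0 b c) $ 1 = 0" by simp
    ultimately have "cP n 1 k" unfolding cP_def using that by blast
    from c_props(2)[OF np this] show False using that unfolding c1_def by simp
  qed
  have min2n: "k * n$2 \<noteq> b * n$1 + c * n$3" if "1 \<le> k" "k < c2" for k b c
  proof
    assume "k * n$2 = b * n$1 + c * n$3"
    hence "mk3 b 0 c \<in> factorizations n (k * n$2)" by (simp add: fact_iff lincomb3)
    moreover have "(mk3 b 0 c) $ 2 = 0" by simp
    ultimately have "cP n 2 k" unfolding cP_def using that by blast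
    from c_props(2)[OF np this] show False using that unfolding c2_def by simp
  qed
  have min3n: "k * n$3 \<noteq> b * n$1 + c * n$2" if "1 \<le> k" "k < c3'" for k b c
  proof
    assume "k * n$3 = b * n$1 + c * n$2"
    hence "mk3 b c 0 \<in> factorizations n (k * n$3)" by (simp add: fact_iff lincomb3)
    moreover have "(mk3 b c 0) $ 3 = 0" by simp
    ultimately have "cP n 3 k" unfolding cP_def using that by blast
    from c_props(2)[OF np this] show False using that unfolding c3'_def by simp
  qed
  have e1n: "c1 * n$1 = a1$2 * n$2 + a1$3 * n$3" using a1 by (simp add: lincomb3)
  have e2n: "c2 * n$2 = a2$1 * n$1 + a2$3 * n$3" using a2 by (simp add: lincomb3)
  have e3n: "c3' * n$3 = a3$1 * n$1 + a3$2 * n$2" using a3 by (simp add: lincomb3)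
  have T0: "tri (int (n$1)) (int (n$2)) (int (n$3)) (int c1) (int c2) (int c3')
    (int (a1$2)) (int (a1$3)) (int (a2$1)) (int (a2$3)) (int (a3$1)) (int (a3$2))"
  proof unfold_locales
    show "int (n$1) > 0" "int (n$2) > 0" "int (n$3) > 0" using np by auto
    show "int c1 \<ge> 1" "int c2 \<ge> 1" "int c3' \<ge> 1" using c1p c2p c3p by auto
    show "int (a1$2) \<ge> 0" "int (a1$3) \<ge> 0" "int (a2$1) \<ge> 0" "int (a2$3) \<ge> 0" "int (a3$1) \<ge> 0" "int (a3$2) \<ge> 0"
      by auto
    show "k * int (n$1) \<noteq> b * int (n$2) + c * int (n$3)" if "1 \<le> k" "k < int c1" "0 \<le> b" "0 \<le> c" for k b c
    proof
      assume "k * int (n$1) = b * int (n$2) + c * int (n$3)"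
      hence "nat k * n$1 = nat b * n$2 + nat c * n$3" using that by (intro int_nat_eq) auto
      moreover have "1 \<le> nat k" "nat k < c1" using that by auto
      ultimately show False using min1n by blast
    qed
    show "k * int (n$2) \<noteq> b * int (n$1) + c * int (n$3)" if "1 \<le> k" "k < int c2" "0 \<le> b" "0 \<le> c" for k b c
    proof
      assume "k * int (n$2) = b * int (n$1) + c * int (n$3)"
      hence "nat k * n$2 = nat b * n$1 + nat c * n$3" using that by (intro int_nat_eq) auto
      moreover have "1 \<le> nat k" "nat k < c2" using that by auto
      ultimately show False using min2n by blast
    qed
    show "k * int (n$3) \<noteq> b * int (n$1) + c * int (n$2)" if "1 \<le> k" "k < int c3'" "0 \<le> b" "0 \<le> c" for k b c
    proof
      assume "k * int (n$3) = b * int (n$1) + c * int (n$2)"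
      hence "nat k * n$3 = nat b * n$1 + nat c * n$2" using that by (intro int_nat_eq) auto
      moreover have "1 \<le> nat k" "nat k < c3'" using that by auto
      ultimately show False using min3n by blast
    qed
    show "int c1 * int (n$1) = int (a1$2) * int (n$2) + int (a1$3) * int (n$3)"
      using arg_cong[OF e1n, of int] by simp
    show "int c2 * int (n$2) = int (a2$1) * int (n$1) + int (a2$3) * int (n$3)"
      using arg_cong[OF e2n, of int] by simp
    show "int c3' * int (n$3) = int (a3$1) * int (n$1) + int (a3$2) * int (n$2)"
      using arg_cong[OF e3n, of int] by simp
    show "int c1 * int (n$1) \<noteq> int c2 * int (n$2)" "int c1 * int (n$1) \<noteq> int c3' * int (n$3)"
      "int c2 * int (n$2) \<noteq> int c3' * int (n$3)"
      using dist by (simp_all only: of_nat_mult[symmetric] of_nat_eq_iff not_False_eq_True)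
  qed
  have U1: "(THE a. a \<in> factorizations n (c_coef n 1 * n$1) \<and> a$1 = 0) = a1"
  proof (rule the_equality)
    show "a1 \<in> factorizations n (c_coef n 1 * n$1) \<and> a1$1 = 0" using a1 by (simp add: fact_iff c1_def)
    fix b assume b: "b \<in> factorizations n (c_coef n 1 * n$1) \<and> b$1 = 0"
    hence "c1 * n$1 = b$2 * n$2 + b$3 * n$3" by (auto simp: fact_iff lincomb3 c1_def)
    hence eqi: "int c1 * int (n$1) = int (b$2) * int (n$2) + int (b$3) * int (n$3)"
      using arg_cong[of _ _ int] by fastforce
    have "int (b$2) = int (a1$2) \<and> int (b$3) = int (a1$3)" by (rule uniq1[OF T0 _ _ eqi]) simp_all
    thus "b = a1" using b a1 by (simp add: vec3_eq)
  qed
  have U2: "(THE a. a \<in> factorizations n (c_coef n 2 * n$2) \<and> a$2 = 0) = a2"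
  proof (rule the_equality)
    show "a2 \<in> factorizations n (c_coef n 2 * n$2) \<and> a2$2 = 0" using a2 by (simp add: fact_iff c2_def)
    fix b assume b: "b \<in> factorizations n (c_coef n 2 * n$2) \<and> b$2 = 0"
    hence "c2 * n$2 = b$1 * n$1 + b$3 * n$3" by (auto simp: fact_iff lincomb3 c2_def)
    hence eqi: "int c2 * int (n$2) = int (b$1) * int (n$1) + int (b$3) * int (n$3)"
      using arg_cong[of _ _ int] by fastforce
    have "int (b$1) = int (a2$1) \<and> int (b$3) = int (a2$3)" by (rule uniq1[OF tri.sw12[OF T0] _ _ eqi]) simp_all
    thus "b = a2" using b a2 by (simp add: vec3_eq)
  qed
  have U3: "(THE a. a \<in> factorizations n (c_coef n 3 * n$3) \<and> a$3 = 0) = a3"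
  proof (rule the_equality)
    show "a3 \<in> factorizations n (c_coef n 3 * n$3) \<and> a3$3 = 0" using a3 by (simp add: fact_iff c3'_def)
    fix b assume b: "b \<in> factorizations n (c_coef n 3 * n$3) \<and> b$3 = 0"
    hence "c3' * n$3 = b$2 * n$2 + b$1 * n$1" by (auto simp: fact_iff lincomb3 c3'_def)
    hence eqi: "int c3' * int (n$3) = int (b$2) * int (n$2) + int (b$1) * int (n$1)"
      using arg_cong[of _ _ int] by fastforce
    have "int (b$2) = int (a3$2) \<and> int (b$1) = int (a3$1)" by (rule uniq1[OF tri.sw13[OF T0] _ _ eqi]) simp_all
    thus "b = a3" using b a3 by (simp add: vec3_eq)
  qed
  have "r_coef n 1 2 = a1$2" "r_coef n 1 3 = a1$3" "r_coef n 2 1 = a2$1" "r_coef n 2 3 = a2$3"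
     "r_coef n 3 1 = a3$1" "r_coef n 3 2 = a3$2" unfolding r_coef_def U1 U2 U3 by auto
  then show ?thesis using T0 unfolding c1_def c2_def c3'_def by simp
qed


lemma rm_nth: "r_matrix n $ i $ j = (if i = j then 0 else r_coef n i j)" by (simp add: r_matrix_def)
lemma Ag: "A_gens a $ 1 = a$1$2 * a$1$3 + a$1$2 * a$2$3 + a$1$3 * a$3$2"
  "A_gens a $ 2 = a$1$3 * a$2$1 + a$2$1 * a$2$3 + a$2$3 * a$3$1"
  "A_gens a $ 3 = a$1$2 * a$3$1 + a$2$1 * a$3$2 + a$3$1 * a$3$2"
  by (simp_all add: A_gens_def)

lemma X_facts:
  assumes "n \<in> X_set"
  shows "A_gens (r_matrix n) = n \<and> r_matrix n \<in> Y_set"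
proof -
  have num: "is_numerical n" and mg: "minimal_gens3 n" and c3: "card (Betti_elements n) = 3"
    using assms unfolding X_set_def by auto
  have np: "\<forall>i. n$i > 0" using npos[OF mg] by blast
  note T = X_tri[OF num mg c3]
  obtain bu bv bw where bz: "bu * int (n$1) + bv * int (n$2) + bw * int (n$3) = 1"
    using numerical_bezout[OF num np] by blast
  note NA = tri.NA[OF T bz]
  have "int (n$1) = int (r_coef n 1 2 * r_coef n 1 3 + r_coef n 1 2 * r_coef n 2 3 + r_coef n 1 3 * r_coef n 3 2)"
    "int (n$2) = int (r_coef n 1 3 * r_coef n 2 1 + r_coef n 2 1 * r_coef n 2 3 + r_coef n 2 3 * r_coef n 3 1)"
    "int (n$3) = int (r_coef n 1 2 * r_coef n 3 1 + r_coef n 2 1 * r_coef n 3 2 + r_coef n 3 1 * r_coef n 3 2)"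
    using NA by simp_all
  hence nn: "n$1 = r_coef n 1 2 * r_coef n 1 3 + r_coef n 1 2 * r_coef n 2 3 + r_coef n 1 3 * r_coef n 3 2"
    "n$2 = r_coef n 1 3 * r_coef n 2 1 + r_coef n 2 1 * r_coef n 2 3 + r_coef n 2 3 * r_coef n 3 1"
    "n$3 = r_coef n 1 2 * r_coef n 3 1 + r_coef n 2 1 * r_coef n 3 2 + r_coef n 3 1 * r_coef n 3 2"
    by (simp_all only: of_nat_eq_iff)
  have AR: "A_gens (r_matrix n) = n" unfolding vec3_eq Ag rm_nth using nn by simp
  have pos: "r_coef n 1 2 > 0" "r_coef n 1 3 > 0" "r_coef n 2 1 > 0" "r_coef n 2 3 > 0"
    "r_coef n 3 1 > 0" "r_coef n 3 2 > 0" using tri.D3all[OF T] by simp_all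
  have "\<forall>i j. i \<noteq> j \<longrightarrow> r_matrix n $ i $ j > 0"
    unfolding forall_3 rm_nth using pos by simp
  moreover have "\<forall>i. r_matrix n $ i $ i = 0" by (simp add: rm_nth)
  ultimately have "r_matrix n \<in> Y_set"
    unfolding Y_set_def is_zero_matrix_def using num mg c3 AR by simp
  thus ?thesis using AR by simp
qed

lemma Y_facts:
  assumes "a \<in> Y_set"
  shows "A_gens a \<in> X_set \<and> r_matrix (A_gens a) = a"
proof -
  have z: "is_zero_matrix a" using assms unfolding Y_set_def by simp
  define n where "n = A_gens a"
  have num: "is_numerical n" and mg: "minimal_gens3 n" and c3: "card (Betti_elements n) = 3"
    using z unfolding is_zero_matrix_def n_def by auto
  have diag: "\<forall>i. a$i$i = 0" and off: "\<forall>i j. i \<noteq> j \<longrightarrow> a$i$j > 0"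
    using z unfolding is_zero_matrix_def by auto
  have pa: "a$1$2 > 0" "a$1$3 > 0" "a$2$1 > 0" "a$2$3 > 0" "a$3$1 > 0" "a$3$2 > 0"
    using off by simp_all
  have np: "\<forall>i. n$i > 0" using npos[OF mg] by blast
  note T = X_tri[OF num mg c3]
  obtain bu bv bw where bz: "bu * int (n$1) + bv * int (n$2) + bw * int (n$3) = 1"
    using numerical_bezout[OF num np] by blast
  have "int (a$1$2) = int (r_coef n 1 2) \<and> int (a$1$3) = int (r_coef n 1 3) \<and> int (a$2$1) = int (r_coef n 2 1) \<and>
        int (a$2$3) = int (r_coef n 2 3) \<and> int (a$3$1) = int (r_coef n 3 1) \<and> int (a$3$2) = int (r_coef n 3 2)"
  proof (rule tri.inj_part[OF T bz])
    show "int (n$1) = int (a$1$2) * int (a$1$3) + int (a$1$2) * int (a$2$3) + int (a$1$3) * int (a$3$2)"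
      unfolding n_def Ag by simp
    show "int (n$2) = int (a$1$3) * int (a$2$1) + int (a$2$1) * int (a$2$3) + int (a$2$3) * int (a$3$1)"
      unfolding n_def Ag by simp
    show "int (n$3) = int (a$1$2) * int (a$3$1) + int (a$2$1) * int (a$3$2) + int (a$3$1) * int (a$3$2)"
      unfolding n_def Ag by simp
  qed (use pa in simp_all)
  hence eqs: "r_coef n 1 2 = a$1$2" "r_coef n 1 3 = a$1$3" "r_coef n 2 1 = a$2$1"
    "r_coef n 2 3 = a$2$3" "r_coef n 3 1 = a$3$1" "r_coef n 3 2 = a$3$2" by simp_all
  have "r_matrix n = a" unfolding vec_eq_iff forall_3 rm_nth using eqs diag by simp
  moreover have "n \<in> X_set" unfolding X_set_def using num mg c3 by simp
  ultimately show ?thesis unfolding n_def by simp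
qed

theorem mainTheorem3:
  shows "bij_betw r_matrix X_set Y_set \<and> bij_betw A_gens Y_set X_set \<and>
         (\<forall>n\<in>X_set. A_gens (r_matrix n) = n) \<and> (\<forall>a\<in>Y_set. r_matrix (A_gens a) = a)"
proof -
  have h1: "\<forall>n\<in>X_set. A_gens (r_matrix n) = n" using X_facts by blast
  have h2: "\<forall>a\<in>Y_set. r_matrix (A_gens a) = a" using Y_facts by blast
  have i1: "r_matrix ` X_set \<subseteq> Y_set" using X_facts by blast
  have i2: "A_gens ` Y_set \<subseteq> X_set" using Y_facts by blast
  have "bij_betw r_matrix X_set Y_set" by (rule bij_betw_byWitness[OF h1 h2 i1 i2])
  moreover have "bij_betw A_gens Y_set X_set" by (rule bij_betw_byWitness[OF h2 h1 i2 i1])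
  ultimately show ?thesis using h1 h2 by blast
qed

end
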